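(* Let $\gamma>0$ and $m\ge1$. For each $y\in\{\pm1\}^m$ let $r_y\in\mathbb{R}^m$ satisfy $r_y[i]y[i]\ge\gamma$ for all $i\in[m]$, and let $R=\{r_y\mid y\in\{\pm1\}^m\}$. Then $\{\pm\gamma\}^m\subseteq\mathrm{conv}(R)$.
   Context: $\mathrm{conv}(R)$ denotes the convex hull of $R$. *)

theory Defs
  imports "HOL-Analysis.Analysis"
begin

end

theory Submission
  imports Defs
begin

theorem mainTheorem8:
  fixes \<gamma> :: real
    and r :: "real^'m \<Rightarrow> real^'m"
  assumes "\<gamma> > 0"
    and "\<And>y i. (\<forall>j. y $ j \<in> {-1, 1}) \<Longrightarrow> r y $ i * y $ i \<ge> \<gamma>"
  shows "{x :: real^'m. \<forall>i. x $ i \<in> {-\<gamma>, \<gamma>}}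
           \<subseteq> convex hull (r ` {y. \<forall>j. y $ j \<in> {-1, 1}})"
proof
  fix x :: "real^'m"
  assume "x \<in> {x :: real^'m. \<forall>i. x $ i \<in> {-\<gamma>, \<gamma>}}"
  hence xs: "\<And>i. x $ i \<in> {-\<gamma>, \<gamma>}" by auto
  let ?Y = "{y::real^'m. \<forall>j. y $ j \<in> {-1, 1}}"
  have "?Y \<subseteq> (\<lambda>f. \<chi> j. f j) ` (UNIV \<rightarrow>\<^sub>E {-1, 1::real})"
  proof
    fix y assume "y \<in> ?Y"
    then show "y \<in> (\<lambda>f. \<chi> j. f j) ` (UNIV \<rightarrow>\<^sub>E {-1, 1::real})"
      by (intro image_eqI[where x="\<lambda>j. y $ j"]) auto
  qed
  moreover have "finite ((\<lambda>f. \<chi> j. f j) ` (UNIV \<rightarrow>\<^sub>E {-1, 1::real}))"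
    by (intro finite_imageI finite_PiE) auto
  ultimately have fin: "finite ?Y" by (rule finite_subset)
  let ?H = "convex hull (r ` ?Y)"
  have cpt: "compact ?H" using fin by (intro finite_imp_compact_convex_hull) auto
  show "x \<in> ?H"
  proof (rule ccontr)
    assume "x \<notin> ?H"
    then obtain a b where ab: "inner a x < b" "\<forall>p\<in>?H. b < inner a p"
      using separating_hyperplane_closed_point[OF convex_convex_hull compact_imp_closed[OF cpt]]
      by blast
    define y :: "real^'m" where "y = (\<chi> i. if a $ i \<le> 0 then 1 else -1)"
    have yY: "y \<in> ?Y" unfolding y_def by auto
    hence "r y \<in> ?H" by (intro hull_inc imageI)
    with ab have lt: "inner a x < inner a (r y)" by auto
    have "\<And>i. a $ i * r y $ i \<le> a $ i * x $ i"
    proof -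
      fix i
      have h: "r y $ i * y $ i \<ge> \<gamma>" using assms(2) yY by auto
      show "a $ i * r y $ i \<le> a $ i * x $ i"
      proof (cases "a $ i \<le> 0")
        case True
        hence "r y $ i \<ge> \<gamma>" using h by (simp add: y_def)
        hence "a $ i * r y $ i \<le> a $ i * \<gamma>" using True by (simp add: mult_left_mono_neg)
        also have "\<dots> \<le> a $ i * x $ i" using xs[of i] True assms(1)
          by (auto simp: mult_nonpos_nonneg)
        finally show ?thesis .
      next
        case False
        hence "r y $ i \<le> - \<gamma>" using h by (simp add: y_def)
        hence "a $ i * r y $ i \<le> a $ i * (-\<gamma>)" using False by (intro mult_left_mono) auto
        also have "\<dots> \<le> a $ i * x $ i" using xs[of i] False assms(1) by auto
        finally show ?thesis .
      qed
    qed
    hence "inner a (r y) \<le> inner a x"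
      unfolding inner_vec_def inner_real_def by (intro sum_mono) auto
    with lt show False by simp
  qed
qed

end
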